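(* Let $k\ge2$ and let $\tau_k$ be the random $k$-bonacci substitution on the alphabet $\{a_1,\ldots,a_k\}$. Then the RS-subshift $X_{\tau_k}$ is semi-mixing with respect to the set of words $\mathcal{S}_{\tau_k}=\{a_1a_i,\ a_ia_1\mid 1\le i\le k\}$.
   Context: The random $k$-bonacci substitution is $\tau_k\colon a_i\mapsto\{a_1a_{i+1},a_{i+1}a_1\}$ for $1\le i\le k-1$, and $a_k\mapsto\{a_1\}$ (for $k=2$ this is the random Fibonacci substitution, for $k=3$ the random tribonacci substitution). A random substitution $\vartheta$ is extended to words by set concatenation; a word is $\vartheta$-legal if it is a subword of some word in $\vartheta^j(x)$ for some $j\ge0$ and letter $x$. The RS-subshift $X_\vartheta$ is the set of bi-infinite sequences all of whose finite subwords are $\vartheta$-legal, with the left shift; $\mathcal{L}$ is its language and $\mathcal{L}^\ell$ the admitted words of length $\ell$. A subshift is semi-mixing with respect to $\mathcal{S}\subsetneq\mathcal{L}^\ell$ if for every $w\in\mathcal{L}$ there is $N$ such that for every $n\ge N$ there exist a word $u$ of length $n$ and $s\in\mathcal{S}$ with $wus\in\mathcal{L}$. *)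

theory Defs
  imports Main "HOL-Library.Sublist"
begin

text \<open>Letters are natural numbers; the letter a_i is represented by i, alphabet {1..k}.
A random substitution is a map from letters to sets of words.\<close>

type_synonym rsubst = "nat \<Rightarrow> nat list set"

definition kbonacci :: "nat \<Rightarrow> rsubst" where
  "kbonacci k i = (if 1 \<le> i \<and> i \<le> k - 1 then {[1, i+1], [i+1, 1]}
                   else if i = k then {[1]} else {})"

fun subst_word :: "rsubst \<Rightarrow> nat list \<Rightarrow> nat list set" where
  "subst_word \<sigma> [] = {[]}"
| "subst_word \<sigma> (a # w) = {u @ v | u v. u \<in> \<sigma> a \<and> v \<in> subst_word \<sigma> w}"

definition subst_set :: "rsubst \<Rightarrow> nat list set \<Rightarrow> nat list set" where
  "subst_set \<sigma> W = (\<Union>w\<in>W. subst_word \<sigma> w)"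

definition legal :: "rsubst \<Rightarrow> nat set \<Rightarrow> nat list \<Rightarrow> bool" where
  "legal \<sigma> A v \<longleftrightarrow> (\<exists>j. \<exists>x\<in>A. \<exists>u\<in>(subst_set \<sigma> ^^ j) {[x]}. sublist v u)"

definition window :: "(int \<Rightarrow> nat) \<Rightarrow> int \<Rightarrow> nat \<Rightarrow> nat list" where
  "window x i n = map (\<lambda>j. x (i + int j)) [0..<n]"

definition RS_subshift :: "rsubst \<Rightarrow> nat set \<Rightarrow> (int \<Rightarrow> nat) set" where
  "RS_subshift \<sigma> A = {x. \<forall>i n. legal \<sigma> A (window x i n)}"

definition language :: "(int \<Rightarrow> nat) set \<Rightarrow> nat list set" where
  "language X = {w. \<exists>x\<in>X. \<exists>i. w = window x i (length w)}"

definition semi_mixing :: "(int \<Rightarrow> nat) set \<Rightarrow> nat \<Rightarrow> nat list set \<Rightarrow> bool" where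
  "semi_mixing X l S \<longleftrightarrow>
     S \<subset> {w \<in> language X. length w = l} \<and>
     (\<forall>w\<in>language X. \<exists>N. \<forall>n\<ge>N. \<exists>u s. length u = n \<and> s \<in> S \<and> w @ u @ s \<in> language X)"

definition S_kbonacci :: "nat \<Rightarrow> nat list set" where
  "S_kbonacci k = {[1, i] | i. 1 \<le> i \<and> i \<le> k} \<union> {[i, 1] | i. 1 \<le> i \<and> i \<le> k}"

end

theory Submission imports Defs begin

lemma subst_word_append:
  "subst_word \<sigma> (xs @ ys) = {a @ b | a b. a \<in> subst_word \<sigma> xs \<and> b \<in> subst_word \<sigma> ys}"
  by (induction xs) (auto, metis append.assoc, fastforce)

lemma subst_word_appendI:
  "a \<in> subst_word \<sigma> xs \<Longrightarrow> b \<in> subst_word \<sigma> ys \<Longrightarrow> a @ b \<in> subst_word \<sigma> (xs @ ys)"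
  by (auto simp: subst_word_append)

lemma T_Suc: "(subst_set \<sigma> ^^ Suc n) W = subst_set \<sigma> ((subst_set \<sigma> ^^ n) W)"
  by simp

lemma subst_set_mono: "V \<subseteq> W \<Longrightarrow> subst_set \<sigma> V \<subseteq> subst_set \<sigma> W"
  unfolding subst_set_def by blast

lemma mem_subst_set: "u \<in> subst_set \<sigma> W \<longleftrightarrow> (\<exists>w\<in>W. u \<in> subst_word \<sigma> w)"
  by (auto simp: subst_set_def)

lemma T_mono: "V \<subseteq> W \<Longrightarrow> (subst_set \<sigma> ^^ n) V \<subseteq> (subst_set \<sigma> ^^ n) W"
  by (induction n) (auto dest: subst_set_mono)

lemma T_append:
  "a \<in> (subst_set \<sigma> ^^ n) {x} \<Longrightarrow> b \<in> (subst_set \<sigma> ^^ n) {y} \<Longrightarrow>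
   a @ b \<in> (subst_set \<sigma> ^^ n) {x @ y}"
proof (induction n arbitrary: a b)
  case 0 then show ?case by simp
next
  case (Suc n)
  from Suc.prems obtain a0 b0 where a0: "a0 \<in> (subst_set \<sigma> ^^ n) {x}" "a \<in> subst_word \<sigma> a0"
    and b0: "b0 \<in> (subst_set \<sigma> ^^ n) {y}" "b \<in> subst_word \<sigma> b0"
    unfolding T_Suc mem_subst_set by blast
  have "a0 @ b0 \<in> (subst_set \<sigma> ^^ n) {x @ y}" using Suc.IH a0 b0 by blast
  moreover have "a @ b \<in> subst_word \<sigma> (a0 @ b0)" by (rule subst_word_appendI[OF a0(2) b0(2)])
  ultimately show ?case unfolding T_Suc mem_subst_set by blast
qed

lemma T_comp:
  assumes "u \<in> (subst_set \<sigma> ^^ n) {v}" "v \<in> (subst_set \<sigma> ^^ j) {w}"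
  shows "u \<in> (subst_set \<sigma> ^^ (n + j)) {w}"
proof -
  have "(subst_set \<sigma> ^^ n) {v} \<subseteq> (subst_set \<sigma> ^^ n) ((subst_set \<sigma> ^^ j) {w})"
    using assms(2) by (intro T_mono) auto
  then show ?thesis using assms(1) unfolding funpow_add comp_def by blast
qed

lemma T_one: "v \<in> \<sigma> x \<Longrightarrow> v \<in> (subst_set \<sigma> ^^ 1) {[x]}"
  by (auto simp: subst_set_def)

definition hom :: "(nat \<Rightarrow> nat list) \<Rightarrow> nat list \<Rightarrow> nat list" where
  "hom g xs = concat (map g xs)"

lemma hom_simps[simp]: "hom g [] = []" "hom g (a # xs) = g a @ hom g xs"
  "hom g (xs @ ys) = hom g xs @ hom g ys"
  by (auto simp: hom_def)

lemma homn_append: "(hom g ^^ n) (xs @ ys) = (hom g ^^ n) xs @ (hom g ^^ n) ys"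
  by (induction n) auto

lemma hom_len: "(\<And>i. g i \<noteq> []) \<Longrightarrow> length (hom g xs) \<ge> length xs"
proof (induction xs)
  case (Cons a xs) then show ?case by (cases "g a") auto
qed simp

lemma homn_len: "(\<And>i. g i \<noteq> []) \<Longrightarrow> length ((hom g ^^ n) xs) \<ge> length xs"
  by (induction n) (auto intro: order.trans[OF _ hom_len])


lemma nest_cons:
  fixes W :: "nat \<Rightarrow> nat list" and c :: "nat \<Rightarrow> nat"
  assumes nest: "\<And>m. \<exists>A B. W (Suc m) = A @ W m @ B \<and> c (Suc m) = length A + c m"
  and "m \<le> M" "0 \<le> int (c m) + i" "int (c m) + i < int (length (W m))"
  shows "0 \<le> int (c M) + i \<and> int (c M) + i < int (length (W M)) \<and>
         W M ! nat (int (c M) + i) = W m ! nat (int (c m) + i)"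
  using assms(2)
proof (induction M rule: dec_induct)
  case base then show ?case using assms by simp
next
  case (step M)
  obtain A B where AB: "W (Suc M) = A @ W M @ B" "c (Suc M) = length A + c M" using nest by blast
  let ?p = "nat (int (c M) + i)"
  have p: "nat (int (c (Suc M)) + i) = length A + ?p" using AB(2) step.IH by auto
  have lt: "?p < length (W M)" using step.IH by linarith
  have "W (Suc M) ! (length A + ?p) = W M ! ?p"
    unfolding AB(1) using lt by (simp add: nth_append)
  then show ?case using step.IH p AB by auto
qed

lemma point_window:
  fixes W :: "nat \<Rightarrow> nat list" and c :: "nat \<Rightarrow> nat"
  assumes nest: "\<And>m. \<exists>A B. W (Suc m) = A @ W m @ B \<and> c (Suc m) = length A + c m"
  and cm: "\<And>m. c m \<ge> m" and lw: "\<And>m. length (W m) \<ge> c m + m"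
  and M: "M \<ge> nat \<bar>i\<bar> + n + 1"
  shows "window (\<lambda>i. W (nat \<bar>i\<bar> + 1) ! nat (int (c (nat \<bar>i\<bar> + 1)) + i)) i n
         = take n (drop (nat (int (c M) + i)) (W M))"
proof (rule nth_equalityI)
  have c1: "int (c M) + i \<ge> 0" using cm[of M] M by linarith
  have c2: "int (c M) + i + int n \<le> int (length (W M))" using lw[of M] M by linarith
  show "length (window (\<lambda>i. W (nat \<bar>i\<bar> + 1) ! nat (int (c (nat \<bar>i\<bar> + 1)) + i)) i n) =
        length (take n (drop (nat (int (c M) + i)) (W M)))"
    using c1 c2 by (simp add: window_def)
  fix t assume "t < length (window (\<lambda>i. W (nat \<bar>i\<bar> + 1) ! nat (int (c (nat \<bar>i\<bar> + 1)) + i)) i n)"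
  then have t: "t < n" by (simp add: window_def)
  define m where "m = nat \<bar>i + int t\<bar> + 1"
  have "m \<le> M" using M t unfolding m_def by linarith
  moreover have "0 \<le> int (c m) + (i + int t)" using cm[of m] unfolding m_def by linarith
  moreover have "int (c m) + (i + int t) < int (length (W m))" using lw[of m] cm[of m] unfolding m_def by linarith
  ultimately have e: "W M ! nat (int (c M) + (i + int t)) = W m ! nat (int (c m) + (i + int t))"
    using nest_cons[of W c, OF nest] by blast
  have "nat (int (c M) + (i + int t)) = nat (int (c M) + i) + t" using c1 by linarith
  then show "window (\<lambda>i. W (nat \<bar>i\<bar> + 1) ! nat (int (c (nat \<bar>i\<bar> + 1)) + i)) i n ! t =
        take n (drop (nat (int (c M) + i)) (W M)) ! t"
    using e t c1 c2 by (simp add: window_def m_def)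
qed


context fixes k :: nat assumes k2: "k \<ge> 2" begin

definition good :: "nat list \<Rightarrow> bool" where "good w \<longleftrightarrow> set w \<subseteq> {1..k}"

definition ff :: "bool \<Rightarrow> nat \<Rightarrow> nat list" where
  "ff b i = (if i = 1 then (if b then [2,1] else [1,2]) else if i < k then [1, Suc i] else [1])"

lemma ff_ne: "ff b i \<noteq> []" by (auto simp: ff_def)

lemma ff_in: "i \<in> {1..k} \<Longrightarrow> ff b i \<in> kbonacci k i"
  using k2 by (auto simp: ff_def kbonacci_def)

lemma ff_good: "good (ff b i)"
  using k2 by (auto simp: ff_def good_def)

lemma good_append[simp]: "good (xs @ ys) \<longleftrightarrow> good xs \<and> good ys"
  by (auto simp: good_def)
lemma good_Cons[simp]: "good (a # ys) \<longleftrightarrow> a \<in> {1..k} \<and> good ys"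
  by (auto simp: good_def)
lemma good_Nil[simp]: "good []" by (auto simp: good_def)

lemma hom_good: "good (hom (ff b) w)"
  by (induction w) (auto simp: ff_good)

lemma homn_good: "good w \<Longrightarrow> good ((hom (ff b) ^^ n) w)"
  by (induction n) (auto simp: hom_good)

lemma hom_in: "good w \<Longrightarrow> hom (ff b) w \<in> subst_word (kbonacci k) w"
proof (induction w)
  case (Cons a w)
  then have "ff b a \<in> kbonacci k a" by (intro ff_in) auto
  with Cons show ?case by auto
qed simp

lemma homn_in: "good w \<Longrightarrow> (hom (ff b) ^^ n) w \<in> (subst_set (kbonacci k) ^^ n) {w}"
proof (induction n)
  case (Suc n)
  then show ?case unfolding T_Suc mem_subst_set
    using hom_in homn_good by force
qed simp

lemma kb_good: "v \<in> kbonacci k i \<Longrightarrow> good v"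
  using k2 by (auto simp: kbonacci_def good_def split: if_splits)

lemma sw_good: "good w \<Longrightarrow> v \<in> subst_word (kbonacci k) w \<Longrightarrow> good v"
  by (induction w arbitrary: v) (auto dest: kb_good)

lemma T_good: "good w \<Longrightarrow> u \<in> (subst_set (kbonacci k) ^^ n) {w} \<Longrightarrow> good u"
  by (induction n arbitrary: u) (auto simp: mem_subst_set dest: sw_good)

lemma lift:
  assumes "sublist x y" "good y" "u \<in> (subst_set (kbonacci k) ^^ j) {x}"
  shows "\<exists>u'\<in>(subst_set (kbonacci k) ^^ j) {y}. sublist u u'"
proof -
  obtain p s where y: "y = p @ x @ s" using assms(1) by (auto simp: sublist_def)
  have gp: "good p" "good s" using assms(2) y by auto
  have "(hom (ff True) ^^ j) p @ u @ (hom (ff True) ^^ j) s \<in> (subst_set (kbonacci k) ^^ j) {y}"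
    unfolding y by (intro T_append homn_in gp assms(3))
  then show ?thesis by blast
qed

lemma legal_good: "legal (kbonacci k) {1..k} v \<Longrightarrow> good v"
proof -
  assume "legal (kbonacci k) {1..k} v"
  then obtain j x u where "x \<in> {1..k}" "u \<in> (subst_set (kbonacci k) ^^ j) {[x]}" "sublist v u"
    by (auto simp: legal_def)
  then show ?thesis using T_good[of "[x]" u j] by (auto simp: good_def sublist_def)
qed

lemma legal_sub: "legal \<sigma> A v \<Longrightarrow> sublist w v \<Longrightarrow> legal \<sigma> A w"
  unfolding legal_def by (meson sublist_order.order_trans)

lemma legal_T:
  assumes "legal (kbonacci k) {1..k} v" "u \<in> (subst_set (kbonacci k) ^^ n) {v}"
  shows "legal (kbonacci k) {1..k} u"
proof -
  obtain j x u0 where x: "x \<in> {1..k}" and u0: "u0 \<in> (subst_set (kbonacci k) ^^ j) {[x]}" "sublist v u0"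
    using assms(1) by (auto simp: legal_def)
  have "good u0" using T_good[OF _ u0(1)] x by auto
  then obtain u' where "u' \<in> (subst_set (kbonacci k) ^^ n) {u0}" "sublist u u'"
    using lift[OF u0(2) _ assms(2)] by blast
  moreover have "u' \<in> (subst_set (kbonacci k) ^^ (n + j)) {[x]}"
    using T_comp[OF calculation(1) u0(1)] .
  ultimately show ?thesis using x unfolding legal_def by blast
qed

lemma legal_of: "x \<in> {1..k} \<Longrightarrow> u \<in> (subst_set (kbonacci k) ^^ j) {[x]} \<Longrightarrow> legal (kbonacci k) {1..k} u"
  unfolding legal_def by (meson sublist_order.order_refl)

lemma legal_T1: "x \<in> {1..k} \<Longrightarrow> v \<in> kbonacci k x \<Longrightarrow> legal (kbonacci k) {1..k} v"
  unfolding legal_def using T_one by blast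

lemma legal_11: "legal (kbonacci k) {1..k} [1,1]"
proof -
  have a: "legal (kbonacci k) {1..k} [k,1]"
    using k2 by (intro legal_T1[of "k-1"]) (auto simp: kbonacci_def)
  have "[1,1,2] \<in> (subst_set (kbonacci k) ^^ 1) {[k,1]}"
    using k2 by (auto simp: subst_set_def kbonacci_def)
  then have "legal (kbonacci k) {1..k} [1,1,2]" using legal_T[OF a] by blast
  then show ?thesis by (rule legal_sub) (auto simp: sublist_def intro: exI[of _ "[]"])
qed

lemma legal_1i: "i \<in> {1..k} \<Longrightarrow> legal (kbonacci k) {1..k} [1,i]"
proof (cases "i = 1")
  case True then show ?thesis using legal_11 by simp
next
  case False
  assume "i \<in> {1..k}"
  then show ?thesis using False
    by (intro legal_T1[of "i-1"]) (auto simp: kbonacci_def)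
qed

lemma legal_i1: "i \<in> {1..k} \<Longrightarrow> legal (kbonacci k) {1..k} [i,1]"
proof (cases "i = 1")
  case True then show ?thesis using legal_11 by simp
next
  case False
  assume "i \<in> {1..k}"
  then show ?thesis using False
    by (intro legal_T1[of "i-1"]) (auto simp: kbonacci_def)
qed

lemma legal_22: "legal (kbonacci k) {1..k} [2,2]"
proof -
  have a: "[1,2] \<in> kbonacci k 1" "[2,1] \<in> kbonacci k 1" using k2 by (auto simp: kbonacci_def)
  have "[1,2] @ [2,1] \<in> subst_word (kbonacci k) ([1] @ [1])"
    by (rule subst_word_appendI) (use a in auto)
  then have "[1,2,2,1] \<in> (subst_set (kbonacci k) ^^ 1) {[1,1]}"
    by (simp add: subst_set_def)
  then have "legal (kbonacci k) {1..k} [1,2,2,1]" using legal_T[OF legal_11] by blast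
  then show ?thesis by (rule legal_sub) (auto simp: sublist_def intro: exI[of _ "[1]"])
qed


lemma set_hom: "set (hom g w) = (\<Union>a\<in>set w. set (g a))"
  by (auto simp: hom_def)

primrec tR :: "nat \<Rightarrow> nat list" where
  "tR 0 = []"
| "tR (Suc m) = tR m @ (hom (ff False) ^^ m) [2]"

lemma hR1: "(hom (ff False) ^^ m) [1] = 1 # tR m"
proof (induction m)
  case (Suc m)
  have "(hom (ff False) ^^ Suc m) [1] = (hom (ff False) ^^ m) ([1] @ [2])"
    by (simp only: funpow_Suc_right comp_def) (simp add: ff_def)
  also have "\<dots> = 1 # tR m @ (hom (ff False) ^^ m) [2]" by (simp only: homn_append Suc) simp
  finally show ?case by simp
qed simp

lemma hR1'[simp]: "(hom (ff False) ^^ m) [Suc 0] = Suc 0 # tR m"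
  using hR1 by simp

lemma hL1: "(hom (ff True) ^^ Suc m) [1] = (hom (ff True) ^^ m) [2] @ (hom (ff True) ^^ m) [1]"
proof -
  have "(hom (ff True) ^^ Suc m) [1] = (hom (ff True) ^^ m) ([2] @ [1])"
    by (simp only: funpow_Suc_right comp_def) (simp add: ff_def)
  then show ?thesis by (simp only: homn_append)
qed

lemma len2: "length ((hom (ff b) ^^ m) [2]) \<ge> 1"
  using homn_len[where g="ff b" and n=m and xs="[2]"] ff_ne by auto

lemma lenL: "length ((hom (ff True) ^^ m) [1]) \<ge> Suc m"
proof (induction m)
  case (Suc m) then show ?case unfolding hL1 length_append using len2[where b=True and m=m] by linarith
qed simp

lemma lentR: "length (tR m) \<ge> m"
proof (induction m)
  case (Suc m) then show ?case using len2[where b=False and m=m] by simp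
qed simp

lemma good_tR: "good (tR m)"
  using homn_good[where w="[1]" and b=False and n=m] k2 by (simp add: hR1)

lemma sublist_take_drop: "sublist (take n (drop p xs)) xs"
proof -
  have "xs = take p xs @ take n (drop p xs) @ drop n (drop p xs)"
    by (simp only: append_take_drop_id)
  then show ?thesis unfolding sublist_def by blast
qed

lemma base_lang:
  assumes u: "u \<in> (subst_set (kbonacci k) ^^ J) {[1]}"
  shows "u \<in> language (RS_subshift (kbonacci k) {1..k})"
proof -
  let ?hL = "hom (ff True)" and ?hR = "hom (ff False)"
  define W where "W m = (?hL ^^ J) ((?hL ^^ m) [1]) @ u @ (?hR ^^ J) (tR m)" for m
  define c where "c m = length ((?hL ^^ J) ((?hL ^^ m) [1]))" for m
  have gu: "good u" using T_good[OF _ u] k2 by auto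
  have nest: "\<exists>A B. W (Suc m) = A @ W m @ B \<and> c (Suc m) = length A + c m" for m
  proof -
    have "W (Suc m) = (?hL ^^ J) ((?hL ^^ m) [2]) @ W m @ (?hR ^^ J) ((?hR ^^ m) [2])"
      unfolding W_def hL1 by (simp add: homn_append)
    moreover have "c (Suc m) = length ((?hL ^^ J) ((?hL ^^ m) [2])) + c m"
      unfolding c_def hL1 by (simp add: homn_append)
    ultimately show ?thesis by blast
  qed
  have cm: "c m \<ge> m" for m
    using homn_len[where g="ff True" and n=J and xs="(?hL ^^ m) [1]"] lenL[of m] ff_ne unfolding c_def by fastforce
  have lw: "length (W m) \<ge> c m + m" for m
    using homn_len[where g="ff False" and n=J and xs="tR m"] lentR[of m] ff_ne unfolding c_def W_def by fastforce
  have legW: "legal (kbonacci k) {1..k} (W m)" for m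
  proof -
    have g1: "good ((?hL ^^ m) [1])" using homn_good k2 by simp
    have "W m \<in> (subst_set (kbonacci k) ^^ J) {(?hL ^^ m) [1] @ [1] @ tR m}"
      unfolding W_def by (intro T_append homn_in u g1 good_tR)
    moreover have "(?hL ^^ m) [1] @ [1] @ tR m \<in> (subst_set (kbonacci k) ^^ m) {[1] @ [1]}"
      using T_append[OF homn_in[where w="[1]" and b=True and n=m] homn_in[where w="[1]" and b=False and n=m]] k2 by (simp add: hR1)
    ultimately have "W m \<in> (subst_set (kbonacci k) ^^ (J + m)) {[1,1]}" using T_comp by fastforce
    then show ?thesis using legal_T[OF legal_11] by blast
  qed
  define x where "x = (\<lambda>i. W (nat \<bar>i\<bar> + 1) ! nat (int (c (nat \<bar>i\<bar> + 1)) + i))"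
  have win: "M \<ge> nat \<bar>i\<bar> + n + 1 \<Longrightarrow> window x i n = take n (drop (nat (int (c M) + i)) (W M))" for M i n
    unfolding x_def by (rule point_window[OF nest cm lw])
  have "x \<in> RS_subshift (kbonacci k) {1..k}"
    unfolding RS_subshift_def
  proof (intro CollectI allI)
    fix i n
    show "legal (kbonacci k) {1..k} (window x i n)"
      using win[OF order.refl] legal_sub[OF legW sublist_take_drop] by metis
  qed
  moreover have "window x 0 (length u) = u"
    using win[where M="length u + 1" and i=0 and n="length u"] by (simp add: W_def c_def)
  ultimately show ?thesis unfolding language_def by (metis (mono_tags, lifting) mem_Collect_eq)
qed

lemma lang_sub:
  assumes "w \<in> language X" "sublist v w" shows "v \<in> language X"
proof -
  obtain x i where x: "x \<in> X" "w = window x i (length w)" using assms(1) by (auto simp: language_def)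
  obtain p s where w: "w = p @ v @ s" using assms(2) by (auto simp: sublist_def)
  have "v = window x (i + int (length p)) (length v)"
  proof (rule nth_equalityI)
    show "length v = length (window x (i + int (length p)) (length v))" by (simp add: window_def)
    fix t assume "t < length v"
    moreover have "w ! (length p + t) = v ! t" using \<open>t < length v\<close> unfolding w by (simp add: nth_append)
    moreover have "w ! (length p + t) = x (i + int (length p + t))"
    proof -
      have j: "length p + t < length w" using \<open>t < length v\<close> w by simp
      have "w ! (length p + t) = window x i (length w) ! (length p + t)"
        using x(2) by (rule arg_cong[where f="\<lambda>l. l ! (length p + t)"])
      also have "\<dots> = x (i + int (length p + t))" using j by (simp add: window_def)
      finally show ?thesis .
    qed
    ultimately show "v ! t = window x (i + int (length p)) (length v) ! t"
      by (simp add: window_def add.assoc)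
  qed
  then show ?thesis using x(1) unfolding language_def by blast
qed

lemma mem_hR: "n < k \<Longrightarrow> Suc n \<in> set ((hom (ff False) ^^ n) [1])"
proof (induction n)
  case (Suc n)
  then have a: "Suc n \<in> set ((hom (ff False) ^^ n) [1])" by simp
  have "Suc (Suc n) \<in> set (ff False (Suc n))" using Suc.prems by (auto simp: ff_def)
  then show ?case using a by (auto simp: set_hom)
qed simp

lemma to_one:
  assumes "legal (kbonacci k) {1..k} v"
  shows "\<exists>J u. u \<in> (subst_set (kbonacci k) ^^ Suc J) {[1]} \<and> sublist v u"
proof -
  obtain j a u0 where a: "a \<in> {1..k}" and u0: "u0 \<in> (subst_set (kbonacci k) ^^ j) {[a]}" "sublist v u0"
    using assms by (auto simp: legal_def)
  define y where "y = (hom (ff False) ^^ (a - 1)) [1]"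
  have "a \<in> set y" using mem_hR[of "a-1"] a unfolding y_def by auto
  then have sy: "sublist [a] y" by (metis split_list sublist_appendI append_Cons append_Nil)
  have gy: "good y" unfolding y_def by (intro homn_good) (use k2 in simp)
  have yT: "y \<in> (subst_set (kbonacci k) ^^ (a-1)) {[1]}" unfolding y_def by (intro homn_in) (use k2 in simp)
  obtain u1 where u1: "u1 \<in> (subst_set (kbonacci k) ^^ j) {y}" "sublist u0 u1"
    using lift[OF sy gy u0(1)] by blast
  have u1': "u1 \<in> (subst_set (kbonacci k) ^^ (j + (a-1))) {[1]}" using T_comp[OF u1(1) yT] .
  obtain u2 where u2: "u2 \<in> (subst_set (kbonacci k) ^^ (j + (a-1))) {[1,2]}" "sublist u1 u2"
  proof -
    have "sublist [1::nat] [1,2]" unfolding sublist_def by (intro exI[of _ "[]"] exI[of _ "[2]"]) simp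
    moreover have "good [1,2]" using k2 by simp
    ultimately show ?thesis using lift[OF _ _ u1'] that by blast
  qed
  have "[1,2] \<in> (subst_set (kbonacci k) ^^ 1) {[1]}" using k2 by (intro T_one) (auto simp: kbonacci_def)
  from T_comp[OF u2(1) this] have "u2 \<in> (subst_set (kbonacci k) ^^ Suc (j + (a-1))) {[1]}" by simp
  moreover have "sublist v u2" using u0(2) u1(2) u2(2) by (meson sublist_order.order_trans)
  ultimately show ?thesis by blast
qed

lemma legal_lang: "legal (kbonacci k) {1..k} v \<Longrightarrow> v \<in> language (RS_subshift (kbonacci k) {1..k})"
  using to_one base_lang lang_sub by blast

fun pairQ :: "nat list \<Rightarrow> bool" where
  "pairQ [] = True"
| "pairQ [a] = True"
| "pairQ (a # b # r) = ((a = 1 \<or> b = 1) \<and> pairQ (b # r))"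

lemma pairQ_nth: "pairQ E \<Longrightarrow> Suc d < length E \<Longrightarrow> E ! d = 1 \<or> E ! Suc d = 1"
proof (induction E arbitrary: d rule: pairQ.induct)
  case (3 a b r)
  then show ?case by (cases d) auto
qed auto

lemma ffF_shape: "ff False a = [1] \<or> (\<exists>y. ff False a = [1, y])"
  by (auto simp: ff_def)

lemma pairQ_1: "pairQ R \<Longrightarrow> (R = [] \<or> hd R = 1) \<Longrightarrow> pairQ (1 # R)"
  by (cases R) auto

lemma pairQ_hom: "pairQ (hom (ff False) z) \<and> (hom (ff False) z = [] \<or> hd (hom (ff False) z) = 1)"
proof (induction z)
  case (Cons a z)
  let ?R = "hom (ff False) z"
  have pR: "pairQ (y # ?R)" for y using Cons by (cases ?R) auto
  from ffF_shape[of a] show ?case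
  proof
    assume "ff False a = [1]" then show ?thesis using Cons pairQ_1 by auto
  next
    assume "\<exists>y. ff False a = [1, y]"
    then obtain y where "ff False a = [1, y]" by blast
    then show ?thesis using pR by simp
  qed
qed simp

lemma take2: "Suc d < length E \<Longrightarrow> take 2 (drop d E) = [E ! d, E ! Suc d]"
  by (simp add: Cons_nth_drop_Suc[symmetric] numeral_2_eq_2)

lemma mixing:
  assumes "legal (kbonacci k) {1..k} w"
  shows "\<exists>N. \<forall>n\<ge>N. \<exists>uu s. length uu = n \<and> s \<in> S_kbonacci k \<and> legal (kbonacci k) {1..k} (w @ uu @ s)"
proof -
  obtain J u where u: "u \<in> (subst_set (kbonacci k) ^^ Suc J) {[1]}" "sublist w u"
    using to_one[OF assms] by blast
  obtain p q where upq: "u = p @ w @ q" using u(2) by (auto simp: sublist_def)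
  have "\<exists>uu s. length uu = n \<and> s \<in> S_kbonacci k \<and> legal (kbonacci k) {1..k} (w @ uu @ s)"
    if n: "n \<ge> length q" for n
  proof -
    define m where "m = n + 2"
    define E where "E = (hom (ff False) ^^ Suc J) (tR m)"
    have lE: "length E \<ge> n + 2"
    proof -
      have "length E \<ge> length (tR m)" unfolding E_def by (rule homn_len) (rule ff_ne)
      then show ?thesis using lentR[of m] unfolding m_def by linarith
    qed
    have "u @ E \<in> (subst_set (kbonacci k) ^^ Suc J) {[1] @ tR m}"
      unfolding E_def by (intro T_append u(1) homn_in good_tR)
    moreover have "[1] @ tR m \<in> (subst_set (kbonacci k) ^^ m) {[1]}"
      using homn_in[where w="[1]" and b=False and n=m] k2 by (simp add: hR1)
    ultimately have "u @ E \<in> (subst_set (kbonacci k) ^^ (Suc J + m)) {[1]}" by (rule T_comp)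
    then have "legal (kbonacci k) {1..k} (u @ E)" by (rule legal_of[rotated]) (use k2 in simp)
    then have l1: "legal (kbonacci k) {1..k} (w @ q @ E)"
      by (rule legal_sub) (unfold upq sublist_def, intro exI[of _ p] exI[of _ "[]"], simp)
    define uu where "uu = take n (q @ E)"
    define s where "s = take 2 (drop n (q @ E))"
    have eq: "w @ uu @ s = w @ take (n + 2) (q @ E)" unfolding uu_def s_def take_add by (rule refl)
    have pre: "prefix (w @ take (n + 2) (q @ E)) (w @ q @ E)"
      using take_is_prefix[of "n+2" "q @ E"] by (simp only: same_prefix_prefix)
    have l2: "legal (kbonacci k) {1..k} (w @ uu @ s)"
      unfolding eq by (rule legal_sub[OF l1 prefix_imp_sublist[OF pre]])
    have luu: "length uu = n" unfolding uu_def using lE by simp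
    define d where "d = n - length q"
    have sd: "s = take 2 (drop d E)" unfolding s_def d_def using n by simp
    have dl: "Suc d < length E" using lE n unfolding d_def by linarith
    have s2: "s = [E ! d, E ! Suc d]" using sd take2[OF dl] by simp
    have Eeq: "E = hom (ff False) ((hom (ff False) ^^ J) (tR m))" unfolding E_def by simp
    have pq: "pairQ E" using pairQ_hom[of "(hom (ff False) ^^ J) (tR m)"] unfolding Eeq[symmetric] by simp
    have gE: "good E" unfolding E_def by (intro homn_good good_tR)
    have "E ! d \<in> set E" "E ! Suc d \<in> set E" using dl by simp_all
    then have m1: "E ! d \<in> {1..k}" "E ! Suc d \<in> {1..k}" using gE unfolding good_def by blast+
    have "s \<in> S_kbonacci k"
      using pairQ_nth[OF pq dl] m1 unfolding s2 S_kbonacci_def by auto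
    then show ?thesis using l2 luu by blast
  qed
  then show ?thesis by blast
qed

end

theorem mainTheorem7:
  fixes k :: nat
  assumes "k \<ge> 2"
  shows "semi_mixing (RS_subshift (kbonacci k) {1..k}) 2 (S_kbonacci k)"
proof -
  let ?X = "RS_subshift (kbonacci k) {1..k}"
  have sub: "S_kbonacci k \<subseteq> {w \<in> language ?X. length w = 2}"
  proof
    fix s assume "s \<in> S_kbonacci k"
    then obtain i where i: "i \<in> {1..k}" "s = [1, i] \<or> s = [i, 1]" unfolding S_kbonacci_def by auto
    then have "legal (kbonacci k) {1..k} s" using legal_1i[OF assms] legal_i1[OF assms] by auto
    then show "s \<in> {w \<in> language ?X. length w = 2}" using legal_lang[OF assms] i by auto
  qed
  have "[2,2] \<in> {w \<in> language ?X. length w = 2}" using legal_lang[OF assms legal_22[OF assms]] by simp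
  moreover have "[2,2] \<notin> S_kbonacci k" unfolding S_kbonacci_def by auto
  ultimately have strict: "S_kbonacci k \<subset> {w \<in> language ?X. length w = 2}" using sub by blast
  have "\<exists>N. \<forall>n\<ge>N. \<exists>u s. length u = n \<and> s \<in> S_kbonacci k \<and> w @ u @ s \<in> language ?X"
    if w: "w \<in> language ?X" for w
  proof -
    obtain x i where "x \<in> ?X" "w = window x i (length w)" using w unfolding language_def by blast
    then have "legal (kbonacci k) {1..k} w" unfolding RS_subshift_def by (metis (mono_tags, lifting) mem_Collect_eq)
    from mixing[OF assms this] obtain N where
      N: "\<forall>n\<ge>N. \<exists>u s. length u = n \<and> s \<in> S_kbonacci k \<and> legal (kbonacci k) {1..k} (w @ u @ s)" by blast
    show ?thesis using N legal_lang[OF assms] by blast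
  qed
  then show ?thesis using strict unfolding semi_mixing_def by blast
qed

end
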